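(* Let $A$ be a monoid and let $0\to M\xrightarrow{i}N\xrightarrow{j}P\to0$ be an admissible short exact sequence of $A$-sets with $P$ projective. Then the sequence splits; more precisely, it is isomorphic to the canonical short exact sequence $0\to M\to M\vee P\to P\to0$.
   Context: A monoid is a commutative multiplicative semigroup with $1$ and absorbing $0$. An $A$-set is a pointed set $(M,\ast)$ with an action satisfying $(ab).m=a.(b.m)$, $a.\ast=\ast$, $0.m=\ast$, $1.m=m$; morphisms are equivariant maps; $0$ denotes the one-point $A$-set. The kernel of $f:M\to N$ is $f^{-1}(\ast)$ and its image is $f(M)$; a sequence $M_1\to M_2\to M_3$ is exact at $M_2$ if the kernel of the second map equals the image of the first, and a short exact sequence $0\to M_1\to M_2\to M_3\to0$ is exact at each of $M_1,M_2,M_3$. A morphism is normal if each fibre over a non-base point has at most one element; a short exact sequence is admissible if all its morphisms are normal. $M\vee P$ is the wedge sum (disjoint union with base points identified), and the canonical sequence uses the inclusion of $M$ and the map collapsing $M$ to the base point. A projective $A$-set is a projective object of the category of $A$-sets. *)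

theory Defs
  imports Main
begin

text \<open>We take the whole type 'a as the monoid A, using the
  classes comm_monoid_mult (commutative, associative, unit 1) and mult_zero
  (0 * x = 0 = x * 0).\<close>

record ('a, 'm) aset =
  carrier :: "'m set"
  base :: 'm
  act :: "'a \<Rightarrow> 'm \<Rightarrow> 'm"

definition is_Aset :: "('a::{comm_monoid_mult,mult_zero}, 'm) aset \<Rightarrow> bool" where
  "is_Aset M \<longleftrightarrow>
     base M \<in> carrier M \<and>
     (\<forall>a. \<forall>m\<in>carrier M. act M a m \<in> carrier M) \<and>
     (\<forall>a b. \<forall>m\<in>carrier M. act M (a * b) m = act M a (act M b m)) \<and>
     (\<forall>a. act M a (base M) = base M) \<and>
     (\<forall>m\<in>carrier M. act M 0 m = base M) \<and>
     (\<forall>m\<in>carrier M. act M 1 m = m)"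

definition Ahom :: "('a::{comm_monoid_mult,mult_zero}, 'm) aset \<Rightarrow> ('a, 'n) aset \<Rightarrow> ('m \<Rightarrow> 'n) \<Rightarrow> bool" where
  "Ahom M N f \<longleftrightarrow>
     (\<forall>m\<in>carrier M. f m \<in> carrier N) \<and>
     f (base M) = base N \<and>
     (\<forall>a. \<forall>m\<in>carrier M. f (act M a m) = act N a (f m))"

definition Aiso :: "('a::{comm_monoid_mult,mult_zero}, 'm) aset \<Rightarrow> ('a, 'n) aset \<Rightarrow> ('m \<Rightarrow> 'n) \<Rightarrow> bool" where
  "Aiso M N f \<longleftrightarrow> Ahom M N f \<and> bij_betw f (carrier M) (carrier N)"

definition Akernel :: "('a, 'm) aset \<Rightarrow> ('a, 'n) aset \<Rightarrow> ('m \<Rightarrow> 'n) \<Rightarrow> 'm set" where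
  "Akernel M N f = {m \<in> carrier M. f m = base N}"

definition Aimage :: "('a, 'm) aset \<Rightarrow> ('m \<Rightarrow> 'n) \<Rightarrow> 'n set" where
  "Aimage M f = f ` carrier M"

definition Anormal :: "('a, 'm) aset \<Rightarrow> ('a, 'n) aset \<Rightarrow> ('m \<Rightarrow> 'n) \<Rightarrow> bool" where
  "Anormal M N f \<longleftrightarrow>
     (\<forall>y\<in>carrier N. y \<noteq> base N \<longrightarrow>
        (\<forall>x1\<in>carrier M. \<forall>x2\<in>carrier M. f x1 = y \<longrightarrow> f x2 = y \<longrightarrow> x1 = x2))"

text \<open>Short exact sequence 0 -> M -i-> N -j-> P -> 0: exact at M (kernel of i is
  the image of 0 -> M, i.e. the base point), at N (ker j = im i) and at P
  (ker (P -> 0) = P equals im j).\<close>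
definition short_exact ::
  "('a::{comm_monoid_mult,mult_zero}, 'm) aset \<Rightarrow> ('a, 'n) aset \<Rightarrow> ('a, 'p) aset \<Rightarrow>
   ('m \<Rightarrow> 'n) \<Rightarrow> ('n \<Rightarrow> 'p) \<Rightarrow> bool" where
  "short_exact M N P i j \<longleftrightarrow>
     is_Aset M \<and> is_Aset N \<and> is_Aset P \<and> Ahom M N i \<and> Ahom N P j \<and>
     Akernel M N i = {base M} \<and>
     Akernel N P j = Aimage M i \<and>
     carrier P = Aimage N j"

text \<open>Admissible: all morphisms normal (0 -> M, and P -> 0 are trivially normal).\<close>
definition admissible_short_exact ::
  "('a::{comm_monoid_mult,mult_zero}, 'm) aset \<Rightarrow> ('a, 'n) aset \<Rightarrow> ('a, 'p) aset \<Rightarrow>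
   ('m \<Rightarrow> 'n) \<Rightarrow> ('n \<Rightarrow> 'p) \<Rightarrow> bool" where
  "admissible_short_exact M N P i j \<longleftrightarrow>
     short_exact M N P i j \<and> Anormal M N i \<and> Anormal N P j"

text \<open>Projectivity of P, with respect to A-sets X, Y carried by types 'x and 'y:
  every morphism P -> Y lifts along every epimorphism (= surjective morphism) X -> Y.\<close>
definition Aprojective_wrt ::
  "('a::{comm_monoid_mult,mult_zero}, 'p) aset \<Rightarrow> 'x itself \<Rightarrow> 'y itself \<Rightarrow> bool" where
  "Aprojective_wrt P TX TY \<longleftrightarrow> is_Aset P \<and>
     (\<forall>(X::('a,'x) aset) (Y::('a,'y) aset) g f.
        is_Aset X \<and> is_Aset Y \<and> Ahom X Y g \<and> g ` carrier X = carrier Y \<and> Ahom P Y f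
        \<longrightarrow> (\<exists>h. Ahom P X h \<and> (\<forall>p\<in>carrier P. g (h p) = f p)))"

text \<open>Wedge sum M \<or> P: disjoint union with base points identified, realised on
  'm + 'p with carrier Inl ` M \<union> Inr ` (P - {base P}).\<close>
definition wedge :: "('a::{comm_monoid_mult,mult_zero}, 'm) aset \<Rightarrow> ('a, 'p) aset \<Rightarrow> ('a, 'm + 'p) aset" where
  "wedge M P =
     \<lparr> carrier = Inl ` carrier M \<union> Inr ` (carrier P - {base P}),
       base = Inl (base M),
       act = (\<lambda>a x. case x of
                Inl m \<Rightarrow> Inl (act M a m)
              | Inr p \<Rightarrow> (if act P a p = base P then Inl (base M) else Inr (act P a p))) \<rparr>"

definition wedge_incl :: "('a, 'p) aset \<Rightarrow> 'm \<Rightarrow> 'm + 'p" where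
  "wedge_incl P m = Inl m"

definition wedge_collapse :: "('a, 'p) aset \<Rightarrow> 'm + 'p \<Rightarrow> 'p" where
  "wedge_collapse P x = (case x of Inl _ \<Rightarrow> base P | Inr p \<Rightarrow> p)"

end

theory Submission
  imports Defs
begin

theorem proposition2p29:
  fixes M :: "('a::{comm_monoid_mult,mult_zero}, 'm) aset"
    and N :: "('a, 'n) aset"
    and P :: "('a, 'p) aset"
    and i :: "'m \<Rightarrow> 'n" and j :: "'n \<Rightarrow> 'p"
  assumes "admissible_short_exact M N P i j"
    and "Aprojective_wrt P TYPE('n) TYPE('p)"
  shows "\<exists>\<alpha> \<beta> \<gamma>. Aiso M M \<alpha> \<and> Aiso N (wedge M P) \<beta> \<and> Aiso P P \<gamma> \<and>
           (\<forall>m\<in>carrier M. \<beta> (i m) = wedge_incl P (\<alpha> m)) \<and>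
           (\<forall>n\<in>carrier N. wedge_collapse P (\<beta> n) = \<gamma> (j n))"
proof -
  have se: "short_exact M N P i j" and ni: "Anormal M N i" and nj: "Anormal N P j"
    using assms(1) unfolding admissible_short_exact_def by auto
  have aM: "is_Aset M" and aN: "is_Aset N" and aP: "is_Aset P" and hi: "Ahom M N i"
    and hj: "Ahom N P j" and ki: "Akernel M N i = {base M}"
    and kj: "Akernel N P j = Aimage M i" and sj: "carrier P = Aimage N j"
    using se unfolding short_exact_def by auto
  note defs = is_Aset_def Ahom_def
  have hid: "\<And>X. is_Aset X \<Longrightarrow> Ahom X X id" by (auto simp: defs)
  have isoid: "\<And>X. is_Aset X \<Longrightarrow> Aiso X X id" using hid by (auto simp: Aiso_def)
  have sur: "j ` carrier N = carrier P" using sj by (simp add: Aimage_def)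
  have "\<exists>h. Ahom P N h \<and> (\<forall>p\<in>carrier P. j (h p) = id p)"
    using assms(2)[unfolded Aprojective_wrt_def] aN aP hj hid[OF aP] sur by blast
  then obtain s where hs: "Ahom P N s" and js: "\<And>p. p \<in> carrier P \<Longrightarrow> j (s p) = p"
    by auto
  have iinj: "inj_on i (carrier M)"
  proof (rule inj_onI)
    fix x y assume x: "x \<in> carrier M" and y: "y \<in> carrier M" and e: "i x = i y"
    show "x = y"
    proof (cases "i x = base N")
      case True
      then have "x \<in> Akernel M N i" "y \<in> Akernel M N i" using x y e by (auto simp: Akernel_def)
      then show ?thesis using ki by auto
    next
      case False
      have "i x \<in> carrier N" using hi x by (simp add: Ahom_def)
      then have "\<forall>x1\<in>carrier M. \<forall>x2\<in>carrier M. i x1 = i x \<longrightarrow> i x2 = i x \<longrightarrow> x1 = x2"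
        using ni False unfolding Anormal_def by simp
      then show ?thesis using x y e by simp
    qed
  qed
  have jinj: "\<And>x y. x \<in> carrier N \<Longrightarrow> y \<in> carrier N \<Longrightarrow> j x = j y \<Longrightarrow> j x \<noteq> base P \<Longrightarrow> x = y"
  proof -
    fix x y assume x: "x \<in> carrier N" and y: "y \<in> carrier N" and e: "j x = j y" and b: "j x \<noteq> base P"
    have "j x \<in> carrier P" using hj x by (simp add: Ahom_def)
    then have "\<forall>x1\<in>carrier N. \<forall>x2\<in>carrier N. j x1 = j x \<longrightarrow> j x2 = j x \<longrightarrow> x1 = x2"
      using nj b unfolding Anormal_def by simp
    then show "x = y" using x y e by simp
  qed
  have ker: "\<And>n. n \<in> carrier N \<Longrightarrow> j n = base P \<longleftrightarrow> n \<in> i ` carrier M"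
    using kj unfolding Akernel_def Aimage_def by blast
  have sj2: "\<And>n. n \<in> carrier N \<Longrightarrow> j n \<noteq> base P \<Longrightarrow> s (j n) = n"
  proof -
    fix n assume n: "n \<in> carrier N" and b: "j n \<noteq> base P"
    have jn: "j n \<in> carrier P" using hj n by (auto simp: Ahom_def)
    have "s (j n) \<in> carrier N" using hs jn by (auto simp: Ahom_def)
    then show "s (j n) = n" using jinj[OF _ n, of "s (j n)"] js[OF jn] b by simp
  qed
  define ii where "ii = the_inv_into (carrier M) i"
  have ii1: "\<And>m. m \<in> carrier M \<Longrightarrow> ii (i m) = m"
    unfolding ii_def using iinj by (simp add: the_inv_into_f_f)
  define \<beta> where "\<beta> n = (if j n = base P then Inl (ii n) else Inr (j n))" for n
  have bi: "\<And>m. m \<in> carrier M \<Longrightarrow> \<beta> (i m) = Inl m"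
  proof -
    fix m assume m: "m \<in> carrier M"
    have "i m \<in> carrier N" using hi m by (auto simp: Ahom_def)
    then have "j (i m) = base P" using ker m by blast
    then show "\<beta> (i m) = Inl m" using ii1 m by (simp add: \<beta>_def)
  qed
  have baseMN: "i (base M) = base N" using hi by (simp add: Ahom_def)
  have hb: "Ahom N (wedge M P) \<beta>"
    unfolding Ahom_def
  proof (intro conjI ballI allI)
    fix n assume n: "n \<in> carrier N"
    show "\<beta> n \<in> carrier (wedge M P)"
    proof (cases "j n = base P")
      case True
      then obtain m where "m \<in> carrier M" "n = i m" using ker n by blast
      then show ?thesis using bi by (simp add: wedge_def)
    next
      case False
      then show ?thesis using hj n by (simp add: \<beta>_def wedge_def Ahom_def)
    qed
  next
    show "\<beta> (base N) = base (wedge M P)"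
      using bi[of "base M"] aM baseMN by (simp add: wedge_def is_Aset_def)
  next
    fix a n assume n: "n \<in> carrier N"
    show "\<beta> (act N a n) = act (wedge M P) a (\<beta> n)"
    proof (cases "j n = base P")
      case True
      then obtain m where m: "m \<in> carrier M" "n = i m" using ker n by blast
      have "act N a n = i (act M a m)" using hi m by (simp add: Ahom_def)
      moreover have "act M a m \<in> carrier M" using aM m by (simp add: is_Aset_def)
      ultimately show ?thesis using bi m by (simp add: wedge_def)
    next
      case False
      have jn: "j n \<in> carrier P" using hj n by (auto simp: Ahom_def)
      have ja: "j (act N a n) = act P a (j n)" using hj n by (simp add: Ahom_def)
      show ?thesis
      proof (cases "act P a (j n) = base P")
        case True
        have "act N a n = act N a (s (j n))" using sj2 n False by simp
        also have "\<dots> = s (act P a (j n))" using hs jn by (simp add: Ahom_def)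
        also have "\<dots> = base N" using True hs by (simp add: Ahom_def)
        finally show ?thesis using False True bi[of "base M"] aM baseMN
          by (simp add: wedge_def \<beta>_def is_Aset_def)
      next
        case c: False
        then show ?thesis using False ja by (simp add: wedge_def \<beta>_def)
      qed
    qed
  qed
  have bb: "bij_betw \<beta> (carrier N) (carrier (wedge M P))"
    unfolding bij_betw_def
  proof
    show "inj_on \<beta> (carrier N)"
    proof (rule inj_onI)
      fix x y assume x: "x \<in> carrier N" and y: "y \<in> carrier N" and e: "\<beta> x = \<beta> y"
      show "x = y"
      proof (cases "j x = base P")
        case True
        then obtain m where m: "m \<in> carrier M" "x = i m" using ker x by blast
        have "j y = base P"
        proof (rule ccontr)
          assume "j y \<noteq> base P"
          then have "\<beta> y = Inr (j y)" by (simp add: \<beta>_def)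
          moreover have "\<beta> x = Inl (ii x)" using True by (simp add: \<beta>_def)
          ultimately show False using e by simp
        qed
        then obtain m' where m': "m' \<in> carrier M" "y = i m'" using ker y by blast
        have bx: "\<beta> x = Inl m" using bi[OF m(1)] m(2) by simp
        have by': "\<beta> y = Inl m'" using bi[OF m'(1)] m'(2) by simp
        have "m = m'" using e bx by' by simp
        then show ?thesis using m(2) m'(2) by simp
      next
        case False
        have "j y \<noteq> base P"
        proof
          assume "j y = base P"
          then have "\<beta> y = Inl (ii y)" by (simp add: \<beta>_def)
          moreover have "\<beta> x = Inr (j x)" using False by (simp add: \<beta>_def)
          ultimately show False using e by simp
        qed
        then have "j y = j x" using e False by (simp add: \<beta>_def)
        then show ?thesis using jinj[OF x y] False by metis
      qed
    qed
  next
    show "\<beta> ` carrier N = carrier (wedge M P)"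
    proof
      show "\<beta> ` carrier N \<subseteq> carrier (wedge M P)" using hb by (auto simp: Ahom_def)
    next
      show "carrier (wedge M P) \<subseteq> \<beta> ` carrier N"
      proof
        fix w assume w: "w \<in> carrier (wedge M P)"
        then consider m where "m \<in> carrier M" "w = Inl m"
          | p where "p \<in> carrier P" "p \<noteq> base P" "w = Inr p" by (auto simp: wedge_def)
        then show "w \<in> \<beta> ` carrier N"
        proof cases
          case 1
          then show ?thesis using bi hi by (force simp: Ahom_def)
        next
          case 2
          then obtain n where n: "n \<in> carrier N" "p = j n" using sj by (auto simp: Aimage_def)
          then show ?thesis using 2 by (force simp: \<beta>_def)
        qed
      qed
    qed
  qed
  show ?thesis
  proof (intro exI conjI ballI)
    show "Aiso M M id" using isoid aM .
    show "Aiso N (wedge M P) \<beta>" using hb bb by (simp add: Aiso_def)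
    show "Aiso P P id" using isoid aP .
  next
    fix m assume "m \<in> carrier M" then show "\<beta> (i m) = wedge_incl P (id m)"
      using bi by (simp add: wedge_incl_def)
  next
    fix n assume "n \<in> carrier N" then show "wedge_collapse P (\<beta> n) = id (j n)"
      by (simp add: wedge_collapse_def \<beta>_def)
  qed
qed

end
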